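(* Let $\mathcal{H}$ be a separable infinite dimensional Hilbert space and let $Z_1,Z_2$ be Read isometries on $\mathcal{H}$. Then for any non-zero $p\in\mathbb{N}$, the WOT-closed algebra $\mathfrak{Z}_p$ generated by $\{Z_\mu:\mu\in\mathbb{F}_2^+,\ |\mu|=p\}$ equals $B(\mathcal{H})$.
   Context: $\mathbb{F}_2^+$ is the free semigroup on $\{1,2\}$ (words in $1,2$), $|\mu|$ the length of a word, and $Z_\mu=Z_{i_1}\cdots Z_{i_n}$ for $\mu=i_1\cdots i_n$. Read isometries are isometries $Z_1,Z_2$ on $\mathcal{H}$ with $Z_1Z_1^*+Z_2Z_2^*=I$, constructed by Read (and streamlined by Davidson), with the property that there exist orthonormal bases $\{h_j\}_{j\in\mathbb{N}}$, $\{g_i\}_{i\in\mathbb{N}}$ of $\mathcal{H}$ and operators $S_{i,j,k}\in\operatorname{span}\{Z_w: w\in\mathbb{F}_2^+,\ |w|=2^k\}$ such that for each $i,j$, $S_{i,j,k}\to g_i\otimes h_j^*$ in the WOT as $k\to\infty$, where $g\otimes h^*$ denotes the rank one operator $\xi\mapsto\langle\xi,h\rangle g$. *)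

theory Defs
  imports "HOL-Analysis.Analysis"
begin

text \<open>HOL-Analysis only provides real inner product spaces, so complex vector
spaces and complex Hilbert spaces are introduced here as type classes.
The inner product is linear in the first and conjugate linear in the second
argument, matching the convention of the rank one operator
xi maps to inner xi h times g.\<close>

class complex_vector = real_vector +
  fixes scaleC :: "complex \<Rightarrow> 'a \<Rightarrow> 'a" (infixr \<open>*\<^sub>C\<close> 75)
  assumes scaleC_add_right: "a *\<^sub>C (x + y) = a *\<^sub>C x + a *\<^sub>C y"
    and scaleC_add_left: "(a + b) *\<^sub>C x = a *\<^sub>C x + b *\<^sub>C x"
    and scaleC_scaleC: "a *\<^sub>C (b *\<^sub>C x) = (a * b) *\<^sub>C x"
    and scaleC_one: "1 *\<^sub>C x = x"
    and scaleR_scaleC: "r *\<^sub>R x = complex_of_real r *\<^sub>C x"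

class complex_inner = complex_vector + real_normed_vector +
  fixes cinner :: "'a \<Rightarrow> 'a \<Rightarrow> complex"
  assumes cinner_commute: "cinner x y = cnj (cinner y x)"
    and cinner_add_left: "cinner (x + y) z = cinner x z + cinner y z"
    and cinner_scaleC_left: "cinner (c *\<^sub>C x) y = c * cinner x y"
    and cinner_self_real: "Im (cinner x x) = 0"
    and cinner_self_nonneg: "0 \<le> Re (cinner x x)"
    and cinner_self_eq_zero: "cinner x x = 0 \<longleftrightarrow> x = 0"
    and norm_eq_sqrt_cinner: "norm x = sqrt (Re (cinner x x))"

class chilbert_space = complex_inner + complete_space

definition cspan :: "'a::complex_vector set \<Rightarrow> 'a set" where
  "cspan S = {\<Sum>x\<in>T. c x *\<^sub>C x | T c. finite T \<and> T \<subseteq> S}"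

definition separable_hspace :: "'a::complex_inner itself \<Rightarrow> bool" where
  "separable_hspace _ \<longleftrightarrow> (\<exists>D::'a set. countable D \<and> closure D = UNIV)"

definition infinite_dimensional :: "'a::complex_vector itself \<Rightarrow> bool" where
  "infinite_dimensional _ \<longleftrightarrow> (\<forall>S::'a set. finite S \<longrightarrow> cspan S \<noteq> UNIV)"

definition clinear :: "('a::complex_vector \<Rightarrow> 'b::complex_vector) \<Rightarrow> bool" where
  "clinear f \<longleftrightarrow> (\<forall>x y. f (x + y) = f x + f y) \<and> (\<forall>c x. f (c *\<^sub>C x) = c *\<^sub>C f x)"

definition bounded_clinear :: "('a::complex_inner \<Rightarrow> 'b::complex_inner) \<Rightarrow> bool" where
  "bounded_clinear f \<longleftrightarrow> clinear f \<and> (\<exists>K. \<forall>x. norm (f x) \<le> norm x * K)"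

definition bounded_ops :: "('a::complex_inner \<Rightarrow> 'a) set" where
  "bounded_ops = {T. bounded_clinear T}"

definition cadjoint :: "('a::complex_inner \<Rightarrow> 'a) \<Rightarrow> ('a \<Rightarrow> 'a)" where
  "cadjoint A = (SOME B. \<forall>x y. cinner (A x) y = cinner x (B y))"

definition isometry :: "('a::complex_inner \<Rightarrow> 'a) \<Rightarrow> bool" where
  "isometry Z \<longleftrightarrow> bounded_clinear Z \<and> (\<forall>x. norm (Z x) = norm x)"

definition rank_one :: "'a::complex_inner \<Rightarrow> 'a \<Rightarrow> ('a \<Rightarrow> 'a)" where
  "rank_one g h = (\<lambda>\<xi>. cinner \<xi> h *\<^sub>C g)"

definition orthonormal_basis :: "(nat \<Rightarrow> 'a::complex_inner) \<Rightarrow> bool" where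
  "orthonormal_basis e \<longleftrightarrow>
     (\<forall>i j. cinner (e i) (e j) = (if i = j then 1 else 0)) \<and> closure (cspan (range e)) = UNIV"

definition op_cspan :: "('a::complex_vector \<Rightarrow> 'a) set \<Rightarrow> ('a \<Rightarrow> 'a) set" where
  "op_cspan S = {(\<lambda>x. \<Sum>A\<in>F. c A *\<^sub>C A x) | F c. finite F \<and> F \<subseteq> S}"

definition wot_tendsto :: "(nat \<Rightarrow> ('a::complex_inner \<Rightarrow> 'a)) \<Rightarrow> ('a \<Rightarrow> 'a) \<Rightarrow> bool" where
  "wot_tendsto S T \<longleftrightarrow> (\<forall>x y. (\<lambda>k. cinner (S k x) y) \<longlonglongrightarrow> cinner (T x) y)"

definition words :: "nat list set" where
  "words = {\<mu>. set \<mu> \<subseteq> {1, 2}}"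

definition Zword :: "('a \<Rightarrow> 'a) \<Rightarrow> ('a \<Rightarrow> 'a) \<Rightarrow> nat list \<Rightarrow> ('a \<Rightarrow> 'a)" where
  "Zword Z1 Z2 \<mu> = foldr (\<lambda>i A. (if i = 1 then Z1 else Z2) \<circ> A) \<mu> id"

definition read_isometries :: "('a::complex_inner \<Rightarrow> 'a) \<Rightarrow> ('a \<Rightarrow> 'a) \<Rightarrow> bool" where
  "read_isometries Z1 Z2 \<longleftrightarrow>
     isometry Z1 \<and> isometry Z2 \<and>
     (\<forall>x. Z1 (cadjoint Z1 x) + Z2 (cadjoint Z2 x) = x) \<and>
     (\<exists>(h::nat \<Rightarrow> 'a) (g::nat \<Rightarrow> 'a) (S::nat \<Rightarrow> nat \<Rightarrow> nat \<Rightarrow> ('a \<Rightarrow> 'a)).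
        orthonormal_basis h \<and> orthonormal_basis g \<and>
        (\<forall>i j k. S i j k \<in> op_cspan {Zword Z1 Z2 w | w. w \<in> words \<and> length w = 2 ^ k}) \<and>
        (\<forall>i j. wot_tendsto (\<lambda>k. S i j k) (rank_one (g i) (h j))))"

definition wot_closed :: "('a::complex_inner \<Rightarrow> 'a) set \<Rightarrow> bool" where
  "wot_closed M \<longleftrightarrow> M \<subseteq> bounded_ops \<and>
     (\<forall>T\<in>bounded_ops.
        (\<forall>F \<epsilon>. finite F \<and> \<epsilon> > 0 \<longrightarrow>
           (\<exists>A\<in>M. \<forall>(x, y)\<in>F. cmod (cinner (A x) y - cinner (T x) y) < \<epsilon>))
        \<longrightarrow> T \<in> M)"

definition op_subalgebra :: "('a::complex_inner \<Rightarrow> 'a) set \<Rightarrow> bool" where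
  "op_subalgebra M \<longleftrightarrow> M \<subseteq> bounded_ops \<and> (\<lambda>x. 0) \<in> M \<and>
     (\<forall>A\<in>M. \<forall>B\<in>M. (\<lambda>x. A x + B x) \<in> M) \<and>
     (\<forall>c. \<forall>A\<in>M. (\<lambda>x. c *\<^sub>C A x) \<in> M) \<and>
     (\<forall>A\<in>M. \<forall>B\<in>M. A \<circ> B \<in> M)"

definition wot_algebra_generated :: "('a::complex_inner \<Rightarrow> 'a) set \<Rightarrow> ('a \<Rightarrow> 'a) set" where
  "wot_algebra_generated S = \<Inter> {M. op_subalgebra M \<and> wot_closed M \<and> S \<subseteq> M}"

end

theory Submission
  imports Defs
begin


lemma scaleC_zero_left [simp]: "(0::complex) *\<^sub>C (x::'a::complex_vector) = 0"
proof -
  have "(0::complex) *\<^sub>C x = (0 + 0) *\<^sub>C x" by simp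
  also have "\<dots> = 0 *\<^sub>C x + 0 *\<^sub>C x" by (rule scaleC_add_left)
  finally show ?thesis by simp
qed

lemma scaleC_zero_right [simp]: "a *\<^sub>C (0::'a::complex_vector) = 0"
proof -
  have "a *\<^sub>C (0::'a) = a *\<^sub>C (0 + 0)" by simp
  also have "\<dots> = a *\<^sub>C 0 + a *\<^sub>C 0" by (rule scaleC_add_right)
  finally show ?thesis by simp
qed

lemma scaleC_minus1: "(-1::complex) *\<^sub>C (x::'a::complex_vector) = - x"
  using scaleR_scaleC[of "-1" x] by simp

lemma scaleC_minus_right: "a *\<^sub>C (- (x::'a::complex_vector)) = - (a *\<^sub>C x)"
proof -
  have "a *\<^sub>C (- x) = a *\<^sub>C ((-1) *\<^sub>C x)" by (simp only: scaleC_minus1)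
  also have "\<dots> = (-1) *\<^sub>C (a *\<^sub>C x)" by (simp only: scaleC_scaleC mult.commute)
  finally show ?thesis by (simp only: scaleC_minus1)
qed

lemma scaleC_diff_right: "a *\<^sub>C ((x::'a::complex_vector) - y) = a *\<^sub>C x - a *\<^sub>C y"
  by (simp only: diff_conv_add_uminus scaleC_add_right scaleC_minus_right)

lemma scaleC_sum_right: "a *\<^sub>C (\<Sum>i\<in>I. f i) = (\<Sum>i\<in>I. a *\<^sub>C (f i::'a::complex_vector))"
  by (induction I rule: infinite_finite_induct) (simp_all add: scaleC_add_right)

lemma scaleC_sum_left: "(\<Sum>i\<in>I. f i) *\<^sub>C (x::'a::complex_vector) = (\<Sum>i\<in>I. f i *\<^sub>C x)"
  by (induction I rule: infinite_finite_induct) (simp_all add: scaleC_add_left)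

lemma cinner_add_right: "cinner x (y + z) = cinner x y + cinner (x::'a::complex_inner) z"
proof -
  have "cinner x (y + z) = cnj (cinner (y + z) x)" by (rule cinner_commute)
  also have "\<dots> = cnj (cinner y x) + cnj (cinner z x)" by (simp only: cinner_add_left complex_cnj_add)
  finally show ?thesis by (simp only: cinner_commute[symmetric])
qed

lemma cinner_scaleC_right: "cinner x (c *\<^sub>C y) = cnj c * cinner (x::'a::complex_inner) y"
proof -
  have "cinner x (c *\<^sub>C y) = cnj (cinner (c *\<^sub>C y) x)" by (rule cinner_commute)
  also have "\<dots> = cnj c * cnj (cinner y x)" by (simp only: cinner_scaleC_left complex_cnj_mult)
  finally show ?thesis by (simp only: cinner_commute[symmetric])
qed

lemma cinner_zero_left [simp]: "cinner 0 (y::'a::complex_inner) = 0"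
  using cinner_scaleC_left[of 0 "0::'a" y] by simp

lemma cinner_zero_right [simp]: "cinner (x::'a::complex_inner) 0 = 0"
  using cinner_scaleC_right[of x 0 "0::'a"] by simp

lemma cinner_minus_left: "cinner (- x) (y::'a::complex_inner) = - cinner x y"
  using cinner_scaleC_left[of "-1" x y] by (simp add: scaleC_minus1)

lemma cinner_diff_left: "cinner (x - z) (y::'a::complex_inner) = cinner x y - cinner z y"
  by (simp only: diff_conv_add_uminus cinner_add_left cinner_minus_left)

lemma cinner_minus_right: "cinner x (- (y::'a::complex_inner)) = - cinner x y"
proof -
  have "cinner x (- y) = cnj (cinner (- y) x)" by (rule cinner_commute)
  also have "\<dots> = - cnj (cinner y x)" by (simp only: cinner_minus_left complex_cnj_minus)
  finally show ?thesis by (simp only: cinner_commute[symmetric])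
qed

lemma cinner_diff_right: "cinner x ((y::'a::complex_inner) - z) = cinner x y - cinner x z"
  by (simp only: diff_conv_add_uminus cinner_add_right cinner_minus_right)

lemma cinner_sum_left: "cinner (\<Sum>i\<in>I. f i) (y::'a::complex_inner) = (\<Sum>i\<in>I. cinner (f i) y)"
  by (induction I rule: infinite_finite_induct) (simp_all add: cinner_add_left)

lemma cinner_sum_right: "cinner y (\<Sum>i\<in>I. f i) = (\<Sum>i\<in>I. cinner (y::'a::complex_inner) (f i))"
  by (induction I rule: infinite_finite_induct) (simp_all add: cinner_add_right)

lemma cinner_self_of_real: "cinner x x = complex_of_real (Re (cinner (x::'a::complex_inner) x))"
  using cinner_self_real[of x] by (simp add: complex_eq_iff)

lemma norm_sq_cinner: "(norm (x::'a::complex_inner))^2 = Re (cinner x x)"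
  using norm_eq_sqrt_cinner[of x] cinner_self_nonneg[of x] by simp

lemma cinner_self_norm: "cinner x x = complex_of_real ((norm (x::'a::complex_inner))^2)"
  by (subst norm_sq_cinner) (rule cinner_self_of_real)

lemma norm_scaleC: "norm (c *\<^sub>C (x::'a::complex_inner)) = cmod c * norm x"
proof -
  have "cinner (c *\<^sub>C x) (c *\<^sub>C x) = (c * cnj c) * cinner x x"
    by (simp add: cinner_scaleC_left cinner_scaleC_right)
  also have "\<dots> = complex_of_real ((cmod c)^2) * complex_of_real ((norm x)^2)"
    by (simp only: complex_norm_square cinner_self_norm[of x])
  also have "\<dots> = complex_of_real ((cmod c * norm x)^2)"
    by (simp only: of_real_mult[symmetric] power_mult_distrib)
  finally have "complex_of_real ((norm (c *\<^sub>C x))^2) = complex_of_real ((cmod c * norm x)^2)"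
    by (simp only: cinner_self_norm[of "c *\<^sub>C x"])
  then have "(norm (c *\<^sub>C x))^2 = (cmod c * norm x)^2"
    by (simp only: of_real_eq_iff)
  then show ?thesis by (rule power2_eq_imp_eq) simp_all
qed

lemma cauchy_schwarz: "cmod (cinner x y) \<le> norm x * norm (y::'a::complex_inner)"
proof (cases "y = 0")
  case True then show ?thesis by simp
next
  case False
  define ny where "ny = (norm y)^2"
  have ny: "ny > 0" using False ny_def by simp
  define a where "a = cinner x y"
  define t where "t = a / complex_of_real ny"
  have yy: "cinner y y = complex_of_real ny" by (simp add: ny_def cinner_self_norm)
  have c1: "cinner y x = cnj a" unfolding a_def by (rule cinner_commute)
  have ca: "a * cnj a = complex_of_real ((cmod a)^2)" by (rule complex_norm_square[symmetric])
  have ct: "cnj t = cnj a / complex_of_real ny" unfolding t_def by simp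
  have "cinner (x - t *\<^sub>C y) (x - t *\<^sub>C y) =
        cinner x x - cnj t * a - t * cnj a + t * cnj t * complex_of_real ny"
    by (simp add: cinner_diff_left cinner_diff_right cinner_scaleC_left cinner_scaleC_right
        yy c1 a_def[symmetric] algebra_simps)
  also have "\<dots> = cinner x x - (a * cnj a) / complex_of_real ny"
    unfolding ct unfolding t_def using ny by (simp add: field_simps)
  also have "\<dots> = cinner x x - complex_of_real ((cmod a)^2 / ny)"
    unfolding ca by simp
  finally have "Re (cinner (x - t *\<^sub>C y) (x - t *\<^sub>C y)) = Re (cinner x x) - (cmod a)^2 / ny"
    by simp
  then have "(norm (x - t *\<^sub>C y))^2 = (norm x)^2 - (cmod a)^2 / ny"
    by (simp only: norm_sq_cinner)
  then have "(cmod a)^2 / ny \<le> (norm x)^2"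
    using zero_le_power2[of "norm (x - t *\<^sub>C y)"] by linarith
  then have "(cmod a)^2 \<le> (norm x)^2 * ny"
    using ny by (simp add: pos_divide_le_eq)
  then have "(cmod a)^2 \<le> (norm x * norm y)^2"
    unfolding ny_def by (simp add: power_mult_distrib)
  then show ?thesis unfolding a_def by (rule power2_le_imp_le) simp
qed



lemma clinear_add: "clinear f \<Longrightarrow> f (x + y) = f x + f y"
  unfolding clinear_def by blast

lemma clinear_scaleC: "clinear f \<Longrightarrow> f (c *\<^sub>C x) = c *\<^sub>C f x"
  unfolding clinear_def by blast

lemma clinear_0: "clinear f \<Longrightarrow> f 0 = 0"
  using clinear_scaleC[of f 0 0] by simp

lemma clinear_sum: "clinear f \<Longrightarrow> f (\<Sum>i\<in>I. g i) = (\<Sum>i\<in>I. f (g i))"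
  by (induction I rule: infinite_finite_induct) (simp_all add: clinear_0 clinear_add)

lemma clinear_diff: "clinear f \<Longrightarrow> f (x - y) = f x - f y"
proof -
  assume f: "clinear f"
  have "f (x - y) + f y = f x" using clinear_add[OF f, of "x - y" y] by simp
  then show ?thesis by (simp add: eq_diff_eq)
qed

lemma bounded_clinear_clinear: "bounded_clinear f \<Longrightarrow> clinear f"
  unfolding bounded_clinear_def by blast

lemma bounded_clinear_pos:
  fixes f :: "'a::complex_inner \<Rightarrow> 'b::complex_inner"
  assumes "bounded_clinear f"
  shows "\<exists>K\<ge>0. \<forall>x. norm (f x) \<le> norm x * K"
proof -
  from assms obtain K where K: "\<forall>x. norm (f x) \<le> norm x * K" unfolding bounded_clinear_def by blast
  have "\<forall>x. norm (f x) \<le> norm x * max K 0"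
  proof
    fix x :: 'a
    have "norm x * K \<le> norm x * max K 0" by (rule mult_left_mono) simp_all
    then show "norm (f x) \<le> norm x * max K 0" using K by (meson order_trans)
  qed
  then show ?thesis by (intro exI[of _ "max K 0"]) simp
qed

lemma bounded_clinear_comp: "bounded_clinear f \<Longrightarrow> bounded_clinear g \<Longrightarrow> bounded_clinear (f \<circ> g)"
proof -
  assume f: "bounded_clinear f" and g: "bounded_clinear g"
  obtain Kf where Kf: "Kf \<ge> 0" "\<forall>x. norm (f x) \<le> norm x * Kf" using bounded_clinear_pos[OF f] by blast
  obtain Kg where Kg: "Kg \<ge> 0" "\<forall>x. norm (g x) \<le> norm x * Kg" using bounded_clinear_pos[OF g] by blast
  have "clinear (f \<circ> g)" using bounded_clinear_clinear[OF f] bounded_clinear_clinear[OF g]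
    unfolding clinear_def by simp
  moreover have "\<forall>x. norm ((f \<circ> g) x) \<le> norm x * (Kg * Kf)"
  proof
    fix x
    have "norm (f (g x)) \<le> norm (g x) * Kf" using Kf by blast
    also have "\<dots> \<le> (norm x * Kg) * Kf" using Kg Kf by (intro mult_right_mono) auto
    finally show "norm ((f \<circ> g) x) \<le> norm x * (Kg * Kf)" by (simp add: mult.assoc)
  qed
  ultimately show ?thesis unfolding bounded_clinear_def by blast
qed

lemma bounded_clinear_ident: "bounded_clinear (\<lambda>x::'a::complex_inner. x)"
  unfolding bounded_clinear_def clinear_def by (intro conjI exI[of _ 1]) auto

lemma bounded_clinear_id: "bounded_clinear (id :: 'a::complex_inner \<Rightarrow> 'a)"
  unfolding id_def by (rule bounded_clinear_ident)

lemma bounded_clinear_zero: "bounded_clinear (\<lambda>x::'a::complex_inner. 0::'b::complex_inner)"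
  unfolding bounded_clinear_def clinear_def by (intro conjI exI[of _ 0]) auto

lemma bounded_clinear_add:
  assumes f: "bounded_clinear f" and g: "bounded_clinear g"
  shows "bounded_clinear (\<lambda>x. f x + g x)"
proof -
  obtain Kf where Kf: "\<forall>x. norm (f x) \<le> norm x * Kf" using f unfolding bounded_clinear_def by blast
  obtain Kg where Kg: "\<forall>x. norm (g x) \<le> norm x * Kg" using g unfolding bounded_clinear_def by blast
  have "clinear (\<lambda>x. f x + g x)" using bounded_clinear_clinear[OF f] bounded_clinear_clinear[OF g]
    unfolding clinear_def by (simp add: scaleC_add_right algebra_simps)
  moreover have "\<forall>x. norm (f x + g x) \<le> norm x * (Kf + Kg)"
  proof
    fix x
    have "norm (f x + g x) \<le> norm (f x) + norm (g x)" by (rule norm_triangle_ineq)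
    also have "\<dots> \<le> norm x * Kf + norm x * Kg" using Kf Kg by (meson add_mono)
    finally show "norm (f x + g x) \<le> norm x * (Kf + Kg)" by (simp add: distrib_left)
  qed
  ultimately show ?thesis unfolding bounded_clinear_def by blast
qed

lemma bounded_clinear_scale:
  assumes f: "bounded_clinear f"
  shows "bounded_clinear (\<lambda>x. c *\<^sub>C f x)"
proof -
  obtain K where K: "\<forall>x. norm (f x) \<le> norm x * K" using f unfolding bounded_clinear_def by blast
  have "clinear (\<lambda>x. c *\<^sub>C f x)" using bounded_clinear_clinear[OF f]
    unfolding clinear_def by (simp add: scaleC_add_right scaleC_scaleC mult.commute)
  moreover have "\<forall>x. norm (c *\<^sub>C f x) \<le> norm x * (cmod c * K)"
  proof
    fix x
    have "norm (c *\<^sub>C f x) = cmod c * norm (f x)" by (rule norm_scaleC)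
    also have "\<dots> \<le> cmod c * (norm x * K)" using K by (intro mult_left_mono) auto
    finally show "norm (c *\<^sub>C f x) \<le> norm x * (cmod c * K)" by (simp add: algebra_simps)
  qed
  ultimately show ?thesis unfolding bounded_clinear_def by blast
qed

lemma bounded_clinear_sumop:
  assumes "finite F" and "\<forall>B\<in>F. bounded_clinear (f B)"
  shows "bounded_clinear (\<lambda>x. \<Sum>B\<in>F. c B *\<^sub>C f B x)"
  using assms
proof (induction F rule: finite_induct)
  case empty
  then show ?case by (simp add: bounded_clinear_zero)
next
  case (insert a F)
  then show ?case
    by (simp add: bounded_clinear_add bounded_clinear_scale)
qed

lemma op_cspan_bounded:
  assumes "\<forall>A\<in>S. bounded_clinear A" and "A \<in> op_cspan S"
  shows "bounded_clinear A"
proof -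
  obtain F c where "A = (\<lambda>x. \<Sum>B\<in>F. c B *\<^sub>C B x)" "finite F" "F \<subseteq> S"
    using assms(2) unfolding op_cspan_def by blast
  then show ?thesis using assms(1) bounded_clinear_sumop[of F "\<lambda>B. B" c] by auto
qed

lemma rank_one_bounded: "bounded_clinear (rank_one (g::'a::complex_inner) h)"
proof -
  have "clinear (rank_one g h)" unfolding clinear_def rank_one_def
    by (simp add: cinner_add_left scaleC_add_left cinner_scaleC_left scaleC_scaleC)
  moreover have "\<forall>x. norm (rank_one g h x) \<le> norm x * (norm h * norm g)"
  proof
    fix x
    have "norm (rank_one g h x) = cmod (cinner x h) * norm g" unfolding rank_one_def by (rule norm_scaleC)
    also have "\<dots> \<le> (norm x * norm h) * norm g" by (intro mult_right_mono cauchy_schwarz) simp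
    finally show "norm (rank_one g h x) \<le> norm x * (norm h * norm g)" by (simp add: mult.assoc)
  qed
  ultimately show ?thesis unfolding bounded_clinear_def by blast
qed

lemma bounded_clinear_tendsto:
  assumes f: "bounded_clinear f" and a: "a \<longlonglongrightarrow> a0"
  shows "(\<lambda>n. f (a n)) \<longlonglongrightarrow> f a0"
proof -
  obtain K where K: "\<forall>x. norm (f x) \<le> norm x * K" using f unfolding bounded_clinear_def by blast
  have "(\<lambda>n. a n - a0) \<longlonglongrightarrow> 0" using a by (simp add: LIM_zero)
  then have "(\<lambda>n. norm (a n - a0)) \<longlonglongrightarrow> 0" by (simp add: tendsto_norm_zero)
  then have z: "(\<lambda>n. norm (a n - a0) * K) \<longlonglongrightarrow> 0" by (simp add: tendsto_mult_left_zero)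
  have "(\<lambda>n. f (a n) - f a0) \<longlonglongrightarrow> 0"
  proof (rule Lim_null_comparison[OF _ z])
    show "\<forall>\<^sub>F n in sequentially. norm (f (a n) - f a0) \<le> norm (a n - a0) * K"
      using K clinear_diff[OF bounded_clinear_clinear[OF f]] by (intro always_eventually) metis
  qed
  then show ?thesis by (simp add: LIM_zero_iff)
qed

lemma cinner_tendsto_left:
  assumes a: "a \<longlonglongrightarrow> a0"
  shows "(\<lambda>n. cinner (a n) y) \<longlonglongrightarrow> cinner a0 (y::'a::complex_inner)"
proof -
  have "(\<lambda>n. a n - a0) \<longlonglongrightarrow> 0" using a by (simp add: LIM_zero)
  then have "(\<lambda>n. norm (a n - a0)) \<longlonglongrightarrow> 0" by (simp add: tendsto_norm_zero)
  then have z: "(\<lambda>n. norm (a n - a0) * norm y) \<longlonglongrightarrow> 0" by (simp add: tendsto_mult_left_zero)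
  have "(\<lambda>n. cinner (a n) y - cinner a0 y) \<longlonglongrightarrow> 0"
  proof (rule Lim_null_comparison[OF _ z])
    show "\<forall>\<^sub>F n in sequentially. norm (cinner (a n) y - cinner a0 y) \<le> norm (a n - a0) * norm y"
      by (intro always_eventually allI) (simp add: cinner_diff_left[symmetric] cauchy_schwarz)
  qed
  then show ?thesis by (simp add: LIM_zero_iff)
qed

lemma Zword_Nil [simp]: "Zword Z1 Z2 [] = id"
  by (simp add: Zword_def)

lemma Zword_Cons: "Zword Z1 Z2 (i # w) = (if i = 1 then Z1 else Z2) \<circ> Zword Z1 Z2 w"
  by (simp add: Zword_def)

lemma Zword_append: "Zword Z1 Z2 (u @ w) = Zword Z1 Z2 u \<circ> Zword Z1 Z2 w"
  by (induction u) (simp_all add: Zword_Cons comp_assoc)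

lemma Zword_bounded:
  assumes "isometry Z1" "isometry Z2"
  shows "bounded_clinear (Zword Z1 Z2 w)"
proof (induction w)
  case Nil
  then show ?case by (simp add: bounded_clinear_ident)
next
  case (Cons i w)
  have "bounded_clinear (if i = 1 then Z1 else Z2)" using assms unfolding isometry_def by simp
  then show ?case unfolding Zword_Cons using Cons.IH by (rule bounded_clinear_comp)
qed



lemma sub_zero: "op_subalgebra M \<Longrightarrow> (\<lambda>x. 0) \<in> M"
  unfolding op_subalgebra_def by blast
lemma sub_add: "op_subalgebra M \<Longrightarrow> A \<in> M \<Longrightarrow> B \<in> M \<Longrightarrow> (\<lambda>x. A x + B x) \<in> M"
  unfolding op_subalgebra_def by blast
lemma sub_scale: "op_subalgebra M \<Longrightarrow> A \<in> M \<Longrightarrow> (\<lambda>x. c *\<^sub>C A x) \<in> M"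
  unfolding op_subalgebra_def by blast
lemma sub_comp: "op_subalgebra M \<Longrightarrow> A \<in> M \<Longrightarrow> B \<in> M \<Longrightarrow> A \<circ> B \<in> M"
  unfolding op_subalgebra_def by blast

lemma sub_sum:
  assumes sub: "op_subalgebra M" and "finite T" and "\<forall>x\<in>T. f x \<in> M"
  shows "(\<lambda>y. \<Sum>x\<in>T. c x *\<^sub>C f x y) \<in> M"
  using assms(2,3)
proof (induction T rule: finite_induct)
  case empty
  then show ?case using sub_zero[OF sub] by simp
next
  case (insert a T)
  have "(\<lambda>y. (\<lambda>y. c a *\<^sub>C f a y) y + (\<lambda>y. \<Sum>x\<in>T. c x *\<^sub>C f x y) y) \<in> M"
    using insert sub_add[OF sub] sub_scale[OF sub] by simp
  then show ?case using insert by simp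
qed

lemma Zword_in_M:
  assumes sub: "op_subalgebra M"
    and gen: "{Zword Z1 Z2 \<mu> | \<mu>. \<mu> \<in> words \<and> length \<mu> = p} \<subseteq> M"
  shows "w \<in> words \<Longrightarrow> length w = n * p \<Longrightarrow> 0 < n \<Longrightarrow> Zword Z1 Z2 w \<in> M"
proof (induction n arbitrary: w)
  case 0
  then show ?case by simp
next
  case (Suc n)
  show ?case
  proof (cases "n = 0")
    case True
    then show ?thesis using Suc.prems gen by auto
  next
    case False
    have wt: "take p w \<in> words" "drop p w \<in> words"
      using Suc.prems(1) set_take_subset[of p w] set_drop_subset[of p w] unfolding words_def by auto
    have lt: "length (take p w) = p" using Suc.prems(2) by simp
    have ld: "length (drop p w) = n * p" using Suc.prems(2) by simp
    have "Zword Z1 Z2 (take p w) \<in> M" using gen wt lt by blast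
    moreover have "Zword Z1 Z2 (drop p w) \<in> M" using Suc.IH[OF wt(2) ld] False by simp
    ultimately have "Zword Z1 Z2 (take p w) \<circ> Zword Z1 Z2 (drop p w) \<in> M" by (rule sub_comp[OF sub])
    then show ?thesis by (simp add: Zword_append[symmetric])
  qed
qed

lemma Zword_in_M':
  assumes sub: "op_subalgebra M"
    and gen: "{Zword Z1 Z2 \<mu> | \<mu>. \<mu> \<in> words \<and> length \<mu> = p} \<subseteq> M"
    and "w \<in> words" "p dvd length w" "0 < length w"
  shows "Zword Z1 Z2 w \<in> M"
proof -
  obtain n where n: "length w = p * n" using assms(4) by blast
  then have "0 < n" using assms(5) by (cases n) auto
  moreover have "length w = n * p" using n by (simp add: mult.commute)
  ultimately show ?thesis using Zword_in_M[OF sub gen assms(3)] by blast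
qed

fun Sprod :: "(nat \<Rightarrow> nat \<Rightarrow> nat \<Rightarrow> ('a \<Rightarrow> 'a)) \<Rightarrow> (nat \<Rightarrow> nat) \<Rightarrow> (nat \<Rightarrow> nat) \<Rightarrow> nat \<Rightarrow> nat list \<Rightarrow> ('a \<Rightarrow> 'a)" where
  "Sprod S a b m [] = id"
| "Sprod S a b m (k # ks) = S (a m) (b m) k \<circ> Sprod S a b (Suc m) ks"

fun Lprod :: "(nat \<Rightarrow> 'a::complex_inner) \<Rightarrow> (nat \<Rightarrow> 'a) \<Rightarrow> (nat \<Rightarrow> nat) \<Rightarrow> (nat \<Rightarrow> nat) \<Rightarrow> nat \<Rightarrow> ('a \<Rightarrow> 'a)" where
  "Lprod g h a b 0 = id"
| "Lprod g h a b (Suc m) = Lprod g h a b m \<circ> rank_one (g (a m)) (h (b m))"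

lemma sandwich:
  fixes Z1 Z2 :: "'a::complex_inner \<Rightarrow> 'a"
  assumes sub: "op_subalgebra M"
    and gen: "{Zword Z1 Z2 \<mu> | \<mu>. \<mu> \<in> words \<and> length \<mu> = p} \<subseteq> M"
    and iso: "isometry Z1" "isometry Z2"
    and Sspan: "\<forall>i j k. S i j k \<in> op_cspan {Zword Z1 Z2 w | w. w \<in> words \<and> length w = 2 ^ k}"
  shows "\<forall>m u w. u \<in> words \<longrightarrow> w \<in> words \<longrightarrow>
     p dvd (length u + sum_list (map (\<lambda>k. 2 ^ k) ks) + length w) \<longrightarrow>
     0 < length u + sum_list (map (\<lambda>k. 2 ^ k) ks) + length w \<longrightarrow>
     Zword Z1 Z2 u \<circ> Sprod S a b m ks \<circ> Zword Z1 Z2 w \<in> M"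
proof (induction ks)
  case Nil
  show ?case
  proof (intro allI impI)
    fix m u w
    assume u: "u \<in> words" and w: "w \<in> words"
      and d: "p dvd (length u + sum_list (map (\<lambda>k. 2 ^ k) ([]::nat list)) + length w)"
      and pos: "0 < length u + sum_list (map (\<lambda>k. 2 ^ k) ([]::nat list)) + length w"
    have uw: "u @ w \<in> words" using u w unfolding words_def by auto
    have "Zword Z1 Z2 (u @ w) \<in> M" using Zword_in_M'[OF sub gen uw] d pos by simp
    then show "Zword Z1 Z2 u \<circ> Sprod S a b m [] \<circ> Zword Z1 Z2 w \<in> M"
      by (simp add: Zword_append)
  qed
next
  case (Cons k ks)
  show ?case
  proof (intro allI impI)
    fix m u w
    assume u: "u \<in> words" and w: "w \<in> words"
      and d: "p dvd (length u + sum_list (map (\<lambda>k. 2 ^ k) (k # ks)) + length w)"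
      and pos: "0 < length u + sum_list (map (\<lambda>k. 2 ^ k) (k # ks)) + length w"
    obtain F c where F: "S (a m) (b m) k = (\<lambda>x. \<Sum>B\<in>F. c B *\<^sub>C B x)" "finite F"
        "F \<subseteq> {Zword Z1 Z2 w | w. w \<in> words \<and> length w = 2 ^ k}"
      using Sspan unfolding op_cspan_def by blast
    define Y where "Y = Sprod S a b (Suc m) ks \<circ> Zword Z1 Z2 w"
    have lin: "clinear (Zword Z1 Z2 u)" by (rule bounded_clinear_clinear[OF Zword_bounded[OF iso]])
    have eq: "Zword Z1 Z2 u \<circ> Sprod S a b m (k # ks) \<circ> Zword Z1 Z2 w
        = (\<lambda>x. \<Sum>B\<in>F. c B *\<^sub>C (Zword Z1 Z2 u \<circ> B \<circ> Y) x)"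
    proof
      fix x
      show "(Zword Z1 Z2 u \<circ> Sprod S a b m (k # ks) \<circ> Zword Z1 Z2 w) x
          = (\<Sum>B\<in>F. c B *\<^sub>C (Zword Z1 Z2 u \<circ> B \<circ> Y) x)"
        by (simp add: F(1) Y_def clinear_sum[OF lin] clinear_scaleC[OF lin])
    qed
    have "\<forall>B\<in>F. Zword Z1 Z2 u \<circ> B \<circ> Y \<in> M"
    proof
      fix B assume "B \<in> F"
      then obtain v where v: "B = Zword Z1 Z2 v" "v \<in> words" "length v = 2 ^ k" using F(3) by blast
      have uv: "u @ v \<in> words" using u v(2) unfolding words_def by auto
      have d': "p dvd (length (u @ v) + sum_list (map (\<lambda>k. 2 ^ k) ks) + length w)"
        using d v(3) by (simp add: algebra_simps)
      have pos': "0 < length (u @ v) + sum_list (map (\<lambda>k. 2 ^ k) ks) + length w"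
        using v(3) by simp
      have "Zword Z1 Z2 (u @ v) \<circ> Sprod S a b (Suc m) ks \<circ> Zword Z1 Z2 w \<in> M"
        by (rule Cons.IH[rule_format, OF uv w d' pos'])
      then show "Zword Z1 Z2 u \<circ> B \<circ> Y \<in> M" by (simp add: v(1) Y_def Zword_append comp_assoc)
    qed
    then have "(\<lambda>x. \<Sum>B\<in>F. c B *\<^sub>C (Zword Z1 Z2 u \<circ> B \<circ> Y) x) \<in> M"
      by (rule sub_sum[OF sub F(2)])
    then show "Zword Z1 Z2 u \<circ> Sprod S a b m (k # ks) \<circ> Zword Z1 Z2 w \<in> M" using eq by simp
  qed
qed

lemma wot_limit_in:
  fixes T :: "'a::complex_inner \<Rightarrow> 'a"
  assumes wc: "wot_closed M" and T: "T \<in> bounded_ops" and K: "infinite K"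
    and A: "\<forall>k\<in>K. A k \<in> M"
    and conv: "\<forall>x y. (\<lambda>k. cinner (A k x) y) \<longlonglongrightarrow> cinner (T x) y"
  shows "T \<in> M"
proof -
  have "\<forall>F \<epsilon>. finite F \<and> \<epsilon> > 0 \<longrightarrow>
           (\<exists>B\<in>M. \<forall>(x, y)\<in>F. cmod (cinner (B x) y - cinner (T x) y) < \<epsilon>)"
  proof (intro allI impI)
    fix F :: "('a \<times> 'a) set" and \<epsilon> :: real
    assume Fe: "finite F \<and> \<epsilon> > 0"
    have "\<forall>q\<in>F. eventually (\<lambda>k. cmod (cinner (A k (fst q)) (snd q) - cinner (T (fst q)) (snd q)) < \<epsilon>) sequentially"
    proof
      fix q assume "q \<in> F"
      have "(\<lambda>k. cinner (A k (fst q)) (snd q)) \<longlonglongrightarrow> cinner (T (fst q)) (snd q)" using conv by blast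
      then show "eventually (\<lambda>k. cmod (cinner (A k (fst q)) (snd q) - cinner (T (fst q)) (snd q)) < \<epsilon>) sequentially"
        using Fe by (simp add: tendsto_iff dist_norm)
    qed
    then have "eventually (\<lambda>k. \<forall>q\<in>F. cmod (cinner (A k (fst q)) (snd q) - cinner (T (fst q)) (snd q)) < \<epsilon>) sequentially"
      using Fe by (simp add: eventually_ball_finite)
    then obtain N where N: "\<forall>k\<ge>N. \<forall>q\<in>F. cmod (cinner (A k (fst q)) (snd q) - cinner (T (fst q)) (snd q)) < \<epsilon>"
      by (auto simp: eventually_sequentially)
    obtain k where k: "k \<in> K" "N \<le> k" using K by (meson infinite_nat_iff_unbounded_le)
    have Nk: "\<forall>q\<in>F. cmod (cinner (A k (fst q)) (snd q) - cinner (T (fst q)) (snd q)) < \<epsilon>"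
      using N k(2) by blast
    show "\<exists>B\<in>M. \<forall>(x, y)\<in>F. cmod (cinner (B x) y - cinner (T x) y) < \<epsilon>"
    proof (rule bexI[of _ "A k"])
      show "A k \<in> M" using A k(1) by blast
      show "\<forall>(x, y)\<in>F. cmod (cinner (A k x) y - cinner (T x) y) < \<epsilon>"
      proof clarify
        fix x y assume "(x, y) \<in> F"
        from Nk[rule_format, OF this] show "cmod (cinner (A k x) y - cinner (T x) y) < \<epsilon>" by simp
      qed
    qed
  qed
  then show ?thesis using wc T unfolding wot_closed_def by blast
qed

lemma Lprod_bounded: "bounded_clinear (Lprod g h a b m)"
proof (induction m)
  case 0
  show ?case by (simp only: Lprod.simps bounded_clinear_id)
next
  case (Suc m)
  show ?case by (simp only: Lprod.simps) (rule bounded_clinear_comp[OF Suc.IH rank_one_bounded])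
qed

lemma Sprod_bounded:
  assumes "\<forall>i j k. bounded_clinear (S i j k)"
  shows "bounded_clinear (Sprod S a b m ks)"
proof (induction ks arbitrary: m)
  case Nil
  show ?case by (simp only: Sprod.simps bounded_clinear_id)
next
  case (Cons k ks)
  show ?case by (simp only: Sprod.simps) (rule bounded_clinear_comp[OF assms[rule_format] Cons.IH])
qed

lemma Lprod_weak:
  "(\<forall>y. (\<lambda>k. cinner (v k) y) \<longlonglongrightarrow> cinner v0 y) \<Longrightarrow>
   (\<forall>y. (\<lambda>k. cinner (Lprod g h a b m (v k)) y) \<longlonglongrightarrow> cinner (Lprod g h a b m v0) y)"
proof (induction m arbitrary: v v0)
  case 0
  then show ?case by simp
next
  case (Suc m)
  have "\<forall>y. (\<lambda>k. cinner (rank_one (g (a m)) (h (b m)) (v k)) y) \<longlonglongrightarrow> cinner (rank_one (g (a m)) (h (b m)) v0) y"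
  proof
    fix y
    have "(\<lambda>k. cinner (v k) (h (b m)) * cinner (g (a m)) y) \<longlonglongrightarrow> cinner v0 (h (b m)) * cinner (g (a m)) y"
      using Suc.prems by (intro tendsto_mult_right) blast
    then show "(\<lambda>k. cinner (rank_one (g (a m)) (h (b m)) (v k)) y) \<longlonglongrightarrow> cinner (rank_one (g (a m)) (h (b m)) v0) y"
      by (simp add: rank_one_def cinner_scaleC_left)
  qed
  from Suc.IH[OF this] show ?case by simp
qed



lemma scaleC_diff_left: "(a - b) *\<^sub>C (x::'a::complex_vector) = a *\<^sub>C x - b *\<^sub>C x"
proof -
  have "(a - b) *\<^sub>C x + b *\<^sub>C x = a *\<^sub>C x" by (simp only: scaleC_add_left[symmetric]) simp
  then show ?thesis by (simp add: eq_diff_eq)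
qed

lemma onb_orth: "orthonormal_basis h \<Longrightarrow> cinner (h i) (h j) = (if i = j then 1 else 0)"
  unfolding orthonormal_basis_def by blast

lemma onb_dense: "orthonormal_basis h \<Longrightarrow> closure (cspan (range h)) = UNIV"
  unfolding orthonormal_basis_def by blast

lemma onb_inj: "orthonormal_basis h \<Longrightarrow> inj h"
proof (rule injI)
  fix i j assume o: "orthonormal_basis h" and e: "h i = h j"
  have "cinner (h i) (h j) = 1" using onb_orth[OF o, of j j] e by simp
  then show "i = j" using onb_orth[OF o, of i j] by (auto split: if_splits)
qed

lemma proj_inner:
  assumes o: "orthonormal_basis h" and i: "i < N"
  shows "cinner (\<Sum>j<N. cinner x (h j) *\<^sub>C h j) (h i) = cinner x (h i)"
proof -
  have "cinner (\<Sum>j<N. cinner x (h j) *\<^sub>C h j) (h i) = (\<Sum>j<N. cinner x (h j) * cinner (h j) (h i))"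
    by (simp add: cinner_sum_left cinner_scaleC_left)
  also have "\<dots> = (\<Sum>j<N. if j = i then cinner x (h j) else 0)"
    by (rule sum.cong) (simp_all add: onb_orth[OF o])
  also have "\<dots> = cinner x (h i)" using i by (simp add: sum.delta')
  finally show ?thesis .
qed

lemma proj_orth:
  assumes o: "orthonormal_basis h"
  shows "cinner (x - (\<Sum>j<N. cinner x (h j) *\<^sub>C h j)) (\<Sum>j<N. d j *\<^sub>C h j) = 0"
proof -
  have "cinner (x - (\<Sum>j<N. cinner x (h j) *\<^sub>C h j)) (\<Sum>j<N. d j *\<^sub>C h j)
      = (\<Sum>j<N. cnj (d j) * cinner (x - (\<Sum>j<N. cinner x (h j) *\<^sub>C h j)) (h j))"
    by (simp add: cinner_sum_right cinner_scaleC_right)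
  also have "\<dots> = 0"
    by (rule sum.neutral) (simp add: cinner_diff_left proj_inner[OF o])
  finally show ?thesis .
qed

lemma pythag:
  assumes "cinner a b = 0"
  shows "(norm (a + b))^2 = (norm a)^2 + (norm (b::'a::complex_inner))^2"
proof -
  have ba: "cinner b a = 0" using assms cinner_commute[of b a] by simp
  have "cinner (a + b) (a + b) = cinner a a + cinner b b"
    using assms ba by (simp add: cinner_add_left cinner_add_right)
  then have "Re (cinner (a + b) (a + b)) = Re (cinner a a) + Re (cinner b b)" by simp
  then show ?thesis by (simp only: norm_sq_cinner)
qed

lemma proj_best:
  assumes o: "orthonormal_basis h"
  shows "norm (x - (\<Sum>j<N. cinner x (h j) *\<^sub>C h j)) \<le> norm (x - (\<Sum>j<N. d j *\<^sub>C h j))"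
proof -
  define P where "P = (\<Sum>j<N. cinner x (h j) *\<^sub>C h j)"
  define z where "z = (\<Sum>j<N. d j *\<^sub>C h j)"
  have pz: "P - z = (\<Sum>j<N. (cinner x (h j) - d j) *\<^sub>C h j)"
    unfolding P_def z_def by (simp add: scaleC_diff_left sum_subtractf)
  have "cinner (x - P) (P - z) = 0" unfolding pz unfolding P_def by (rule proj_orth[OF o])
  then have "(norm ((x - P) + (P - z)))^2 = (norm (x - P))^2 + (norm (P - z))^2" by (rule pythag)
  then have "(norm (x - P))^2 \<le> (norm (x - z))^2" by simp
  then have "norm (x - P) \<le> norm (x - z)" by (rule power2_le_imp_le) simp
  then show ?thesis unfolding P_def z_def .
qed

lemma cspan_onb_repr:
  assumes o: "orthonormal_basis h" and z: "z \<in> cspan (range h)"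
  shows "\<exists>N0. \<forall>N\<ge>N0. \<exists>d. z = (\<Sum>j<N. d j *\<^sub>C h j)"
proof -
  obtain T c where T: "z = (\<Sum>v\<in>T. c v *\<^sub>C v)" "finite T" "T \<subseteq> range h"
    using z unfolding cspan_def by blast
  define J where "J = {j. h j \<in> T}"
  have inj: "inj h" by (rule onb_inj[OF o])
  have fJ: "finite J" unfolding J_def using finite_vimageI[OF T(2) inj] by (simp add: vimage_def)
  obtain N0 where N0: "\<forall>j\<in>J. j < N0" using fJ finite_nat_bounded[OF fJ] by blast
  have hJ: "h ` J = T" unfolding J_def using T(3) by blast
  have zJ: "z = (\<Sum>j\<in>J. c (h j) *\<^sub>C h j)"
    unfolding T(1) hJ[symmetric] by (simp add: sum.reindex inj_on_subset[OF inj])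
  show ?thesis
  proof (intro exI allI impI)
    fix N assume N: "N0 \<le> N"
    have sub: "J \<subseteq> {..<N}" using N0 N by auto
    have "(\<Sum>j<N. (if j \<in> J then c (h j) else 0) *\<^sub>C h j) = (\<Sum>j\<in>J. c (h j) *\<^sub>C h j)"
    proof -
      have "(\<Sum>j<N. (if j \<in> J then c (h j) else 0) *\<^sub>C h j) = (\<Sum>j\<in>{..<N}. if j \<in> J then c (h j) *\<^sub>C h j else 0)"
        by (rule sum.cong) simp_all
      also have "\<dots> = (\<Sum>j\<in>{..<N} \<inter> J. c (h j) *\<^sub>C h j)"
        by (simp add: sum.inter_restrict)
      also have "{..<N} \<inter> J = J" using sub by blast
      finally show ?thesis .
    qed
    then show "z = (\<Sum>j<N. (if j \<in> J then c (h j) else 0) *\<^sub>C h j)" using zJ by simp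
  qed
qed

lemma onb_expansion:
  assumes o: "orthonormal_basis h"
  shows "(\<lambda>N. \<Sum>j<N. cinner x (h j) *\<^sub>C h j) \<longlonglongrightarrow> x"
proof (rule LIMSEQ_I)
  fix r :: real assume r: "0 < r"
  have "x \<in> closure (cspan (range h))" using onb_dense[OF o] by simp
  then obtain z where z: "z \<in> cspan (range h)" "dist z x < r" using r closure_approachable by blast
  obtain N0 where N0: "\<forall>N\<ge>N0. \<exists>d. z = (\<Sum>j<N. d j *\<^sub>C h j)" using cspan_onb_repr[OF o z(1)] by blast
  show "\<exists>no. \<forall>n\<ge>no. norm ((\<Sum>j<n. cinner x (h j) *\<^sub>C h j) - x) < r"
  proof (intro exI allI impI)
    fix n assume n: "N0 \<le> n"
    then obtain d where d: "z = (\<Sum>j<n. d j *\<^sub>C h j)" using N0 by blast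
    have "norm ((\<Sum>j<n. cinner x (h j) *\<^sub>C h j) - x) = norm (x - (\<Sum>j<n. cinner x (h j) *\<^sub>C h j))"
      by (rule norm_minus_commute)
    also have "\<dots> \<le> norm (x - z)" unfolding d by (rule proj_best[OF o])
    also have "\<dots> = dist z x" by (simp add: dist_norm norm_minus_commute)
    finally show "norm ((\<Sum>j<n. cinner x (h j) *\<^sub>C h j) - x) < r" using z(2) by simp
  qed
qed

lemma onb_nonorth:
  assumes o: "orthonormal_basis h" and u: "cinner u u = 1"
  shows "\<exists>j. cinner u (h j) \<noteq> 0"
proof (rule ccontr)
  assume "\<not> (\<exists>j. cinner u (h j) \<noteq> 0)"
  then have z0: "\<forall>j. cinner u (h j) = 0" by simp
  have "(norm u)^2 = 1^2" using norm_sq_cinner[of u] u by simp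
  then have nu: "norm u = 1" by (rule power2_eq_imp_eq) simp_all
  have "u \<in> closure (cspan (range h))" using onb_dense[OF o] by simp
  then obtain z where z: "z \<in> cspan (range h)" "dist z u < 1/2" using closure_approachable[of u]
    by (metis divide_pos_pos zero_less_numeral zero_less_one)
  obtain T c where T: "z = (\<Sum>v\<in>T. c v *\<^sub>C v)" "finite T" "T \<subseteq> range h"
    using z(1) unfolding cspan_def by blast
  have "cinner u z = (\<Sum>v\<in>T. cnj (c v) * cinner u v)" unfolding T(1)
    by (simp add: cinner_sum_right cinner_scaleC_right)
  also have "\<dots> = 0" using T(3) z0 by (intro sum.neutral) auto
  finally have uz: "cinner u z = 0" .
  have "cinner u u = cinner u (u - z)" by (simp add: cinner_diff_right uz)
  then have "cmod (cinner u u) \<le> norm u * norm (u - z)" by (simp add: cauchy_schwarz)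
  also have "\<dots> < 1/2" using nu z(2) by (simp add: dist_norm norm_minus_commute)
  finally show False using u by simp
qed



lemma sum_pow_mod:
  assumes "\<forall>k\<in>set ks. 2 ^ k mod p = (r::nat)"
  shows "sum_list (map (\<lambda>k. 2 ^ k) ks) mod p = (length ks * r) mod p"
  using assms
proof (induction ks)
  case Nil
  then show ?case by simp
next
  case (Cons k ks)
  have "sum_list (map (\<lambda>k. 2 ^ k) (k # ks)) mod p
      = ((2 ^ k) mod p + sum_list (map (\<lambda>k. 2 ^ k) ks) mod p) mod p"
    by (simp add: mod_add_eq)
  also have "\<dots> = (r + (length ks * r) mod p) mod p" using Cons by simp
  also have "\<dots> = (r + length ks * r) mod p" by (simp add: mod_add_right_eq)
  finally show ?case by simp
qed

lemma sum_pow_pos: "ks \<noteq> [] \<Longrightarrow> 0 < sum_list (map (\<lambda>k. (2::nat) ^ k) ks)"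
  by (cases ks) auto

lemma rank_ones_in:
  fixes Z1 Z2 :: "'a::complex_inner \<Rightarrow> 'a" and g h :: "nat \<Rightarrow> 'a"
  assumes sub: "op_subalgebra M" and wc: "wot_closed M"
    and gen: "{Zword Z1 Z2 \<mu> | \<mu>. \<mu> \<in> words \<and> length \<mu> = p} \<subseteq> M" and p: "p \<noteq> 0"
    and iso: "isometry Z1" "isometry Z2"
    and og: "orthonormal_basis g" and oh: "orthonormal_basis h"
    and Sspan: "\<forall>i j k. S i j k \<in> op_cspan {Zword Z1 Z2 w | w. w \<in> words \<and> length w = 2 ^ k}"
    and Sconv: "\<forall>i j. wot_tendsto (\<lambda>k. S i j k) (rank_one (g i) (h j))"
  shows "rank_one (g i) (h j) \<in> M"
proof -
  have Sb: "\<forall>i j k. bounded_clinear (S i j k)"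
  proof (intro allI)
    fix i j k
    have "\<forall>A\<in>{Zword Z1 Z2 w | w. w \<in> words \<and> length w = 2 ^ k}. bounded_clinear A"
      using Zword_bounded[OF iso] by blast
    then show "bounded_clinear (S i j k)" using Sspan op_cspan_bounded by blast
  qed
  have g00: "cinner (g 0) (g 0) = 1" using onb_orth[OF og, of 0 0] by simp
  obtain js where js: "cinner (g 0) (h js) \<noteq> 0" using onb_nonorth[OF oh g00] by blast
  define c where "c = cinner (g 0) (h js)"
  have c0: "c \<noteq> 0" using js c_def by simp
  have fin: "finite ((\<lambda>k::nat. (2::nat) ^ k mod p) ` UNIV)"
    by (rule finite_subset[of _ "{..<p}"]) (use p in auto)
  obtain k0 where "infinite {k \<in> UNIV. (2::nat) ^ k mod p = 2 ^ k0 mod p}"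
    using pigeonhole_infinite[OF infinite_UNIV_nat fin] by blast
  define r where "r = (2::nat) ^ k0 mod p"
  define K where "K = {k. (2::nat) ^ k mod p = r}"
  have K: "infinite K" using \<open>infinite _\<close> unfolding K_def r_def by simp
  define a where "a = (\<lambda>l::nat. if l = 0 then i else 0)"
  define b where "b = (\<lambda>l::nat. if l = p - 1 then j else js)"
  have claim: "\<forall>ks. length ks = p - m \<longrightarrow> set ks \<subseteq> K \<longrightarrow> Lprod g h a b m \<circ> Sprod S a b m ks \<in> M"
    if "m \<le> p" for m
    using that
  proof (induction m)
    case 0
    show ?case
    proof (intro allI impI)
      fix ks :: "nat list" assume len: "length ks = p - 0" and ks: "set ks \<subseteq> K"
      have "\<forall>k\<in>set ks. 2 ^ k mod p = r" using ks unfolding K_def by blast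
      then have sm: "sum_list (map (\<lambda>k. 2 ^ k) ks) mod p = (length ks * r) mod p"
        by (rule sum_pow_mod)
      then have "sum_list (map (\<lambda>k. 2 ^ k) ks) mod p = 0" using len by simp
      then have dv: "p dvd (length ([]::nat list) + sum_list (map (\<lambda>k. 2 ^ k) ks) + length ([]::nat list))"
        by (simp add: dvd_eq_mod_eq_0)
      have "ks \<noteq> []" using len p by auto
      then have pos: "0 < length ([]::nat list) + sum_list (map (\<lambda>k. 2 ^ k) ks) + length ([]::nat list)"
        using sum_pow_pos by simp
      have ew: "([]::nat list) \<in> words" unfolding words_def by simp
      have "Zword Z1 Z2 [] \<circ> Sprod S a b 0 ks \<circ> Zword Z1 Z2 [] \<in> M"
        by (rule sandwich[OF sub gen iso Sspan, rule_format, OF ew ew dv pos])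
      then show "Lprod g h a b 0 \<circ> Sprod S a b 0 ks \<in> M" by simp
    qed
  next
    case (Suc m)
    have mp: "m < p" using Suc.prems by simp
    show ?case
    proof (intro allI impI)
      fix ks :: "nat list" assume len: "length ks = p - Suc m" and ks: "set ks \<subseteq> K"
      define C where "C = Sprod S a b (Suc m) ks"
      define A where "A = (\<lambda>k. Lprod g h a b m \<circ> Sprod S a b m (k # ks))"
      define T where "T = Lprod g h a b (Suc m) \<circ> C"
      have AM: "\<forall>k\<in>K. A k \<in> M"
      proof
        fix k assume k: "k \<in> K"
        have l1: "length (k # ks) = p - m" using len mp by simp
        have s1: "set (k # ks) \<subseteq> K" using k ks by simp
        have IH': "\<forall>ks. length ks = p - m \<longrightarrow> set ks \<subseteq> K \<longrightarrow> Lprod g h a b m \<circ> Sprod S a b m ks \<in> M"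
          by (rule Suc.IH[OF less_imp_le[OF mp]])
        show "A k \<in> M" unfolding A_def by (rule IH'[rule_format, OF l1 s1])
      qed
      have TB: "T \<in> bounded_ops" unfolding T_def C_def bounded_ops_def
        using bounded_clinear_comp[OF Lprod_bounded Sprod_bounded[OF Sb]] by blast
      have conv: "\<forall>x y. (\<lambda>k. cinner (A k x) y) \<longlonglongrightarrow> cinner (T x) y"
      proof (intro allI)
        fix x y
        have "\<forall>y. (\<lambda>k. cinner (S (a m) (b m) k (C x)) y) \<longlonglongrightarrow> cinner (rank_one (g (a m)) (h (b m)) (C x)) y"
          using Sconv unfolding wot_tendsto_def by blast
        from Lprod_weak[OF this, of g h a b m]
        have "(\<lambda>k. cinner (Lprod g h a b m (S (a m) (b m) k (C x))) y) \<longlonglongrightarrow>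
              cinner (Lprod g h a b m (rank_one (g (a m)) (h (b m)) (C x))) y" by blast
        then show "(\<lambda>k. cinner (A k x) y) \<longlonglongrightarrow> cinner (T x) y"
          by (simp add: A_def T_def C_def)
      qed
      have "T \<in> M" by (rule wot_limit_in[OF wc TB K AM conv])
      then show "Lprod g h a b (Suc m) \<circ> Sprod S a b (Suc m) ks \<in> M" unfolding T_def C_def .
    qed
  qed
  have "Lprod g h a b p \<circ> Sprod S a b p [] \<in> M" using claim[of p] by simp
  then have LM: "Lprod g h a b p \<in> M" by simp
  have formula: "\<forall>x. Lprod g h a b m x = (cinner x (h (b (m - 1))) * c ^ (m - 1)) *\<^sub>C g i"
    if "1 \<le> m" "m \<le> p" for m
    using that
  proof (induction m)
    case 0
    then show ?case by simp
  next
    case (Suc m)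
    show ?case
    proof (cases "m = 0")
      case True
      then show ?thesis by (simp add: rank_one_def a_def)
    next
      case False
      have IH: "\<forall>x. Lprod g h a b m x = (cinner x (h (b (m - 1))) * c ^ (m - 1)) *\<^sub>C g i"
        using Suc False by simp
      have bm: "b (m - 1) = js" using False Suc.prems unfolding b_def by auto
      have am: "a m = 0" using False unfolding a_def by simp
      have cm: "c ^ m = c * c ^ (m - 1)" using False by (cases m) simp_all
      show ?thesis
      proof
        fix x
        have "Lprod g h a b (Suc m) x = Lprod g h a b m (cinner x (h (b m)) *\<^sub>C g 0)"
          by (simp add: rank_one_def am)
        also have "\<dots> = (cinner (cinner x (h (b m)) *\<^sub>C g 0) (h js) * c ^ (m - 1)) *\<^sub>C g i"
          using IH bm by simp
        also have "\<dots> = (cinner x (h (b m)) * c ^ m) *\<^sub>C g i"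
          by (simp add: cinner_scaleC_left c_def[symmetric] cm mult.assoc)
        finally show "Lprod g h a b (Suc m) x = (cinner x (h (b (Suc m - 1))) * c ^ (Suc m - 1)) *\<^sub>C g i"
          by simp
      qed
    qed
  qed
  have Lp: "Lprod g h a b p x = (cinner x (h j) * c ^ (p - 1)) *\<^sub>C g i" for x
    using formula[of p] p unfolding b_def by simp
  have "rank_one (g i) (h j) = (\<lambda>x. (1 / c ^ (p - 1)) *\<^sub>C Lprod g h a b p x)"
  proof
    fix x
    have "(1 / c ^ (p - 1)) *\<^sub>C Lprod g h a b p x = ((1 / c ^ (p - 1)) * (cinner x (h j) * c ^ (p - 1))) *\<^sub>C g i"
      by (simp add: Lp scaleC_scaleC)
    also have "(1 / c ^ (p - 1)) * (cinner x (h j) * c ^ (p - 1)) = cinner x (h j)"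
      using c0 by simp
    finally show "rank_one (g i) (h j) x = (1 / c ^ (p - 1)) *\<^sub>C Lprod g h a b p x"
      by (simp add: rank_one_def)
  qed
  then show ?thesis using sub_scale[OF sub LM] by simp
qed

lemma bounded_in_M:
  fixes g h :: "nat \<Rightarrow> 'a::complex_inner"
  assumes sub: "op_subalgebra M" and wc: "wot_closed M"
    and og: "orthonormal_basis g" and oh: "orthonormal_basis h"
    and ri: "\<forall>i j. rank_one (g i) (h j) \<in> M"
  shows "bounded_ops \<subseteq> M"
proof -
  have r1: "\<forall>u j. rank_one u (h j) \<in> M"
  proof (intro allI)
    fix u j
    have "u \<in> closure (cspan (range g))" using onb_dense[OF og] by simp
    then obtain U where U: "\<forall>n. U n \<in> cspan (range g)" "U \<longlonglongrightarrow> u" by (auto simp: closure_sequential)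
    have AM: "\<forall>n\<in>UNIV. rank_one (U n) (h j) \<in> M"
    proof
      fix n
      obtain T c where T: "U n = (\<Sum>v\<in>T. c v *\<^sub>C v)" "finite T" "T \<subseteq> range g"
        using U(1) unfolding cspan_def by blast
      have eq: "rank_one (U n) (h j) = (\<lambda>y. \<Sum>v\<in>T. c v *\<^sub>C rank_one v (h j) y)"
        by (rule ext) (simp add: T(1) rank_one_def scaleC_sum_right scaleC_scaleC mult.commute)
      have "\<forall>v\<in>T. rank_one v (h j) \<in> M" using T(3) ri by blast
      then show "rank_one (U n) (h j) \<in> M" unfolding eq by (rule sub_sum[OF sub T(2)])
    qed
    have conv: "\<forall>x y. (\<lambda>n. cinner (rank_one (U n) (h j) x) y) \<longlonglongrightarrow> cinner (rank_one u (h j) x) y"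
    proof (intro allI)
      fix x y
      have "(\<lambda>n. cinner x (h j) * cinner (U n) y) \<longlonglongrightarrow> cinner x (h j) * cinner u y"
        by (intro tendsto_mult_left cinner_tendsto_left U(2))
      then show "(\<lambda>n. cinner (rank_one (U n) (h j) x) y) \<longlonglongrightarrow> cinner (rank_one u (h j) x) y"
        by (simp add: rank_one_def cinner_scaleC_left)
    qed
    have RB: "rank_one u (h j) \<in> bounded_ops" by (simp add: bounded_ops_def rank_one_bounded)
    show "rank_one u (h j) \<in> M"
      by (rule wot_limit_in[OF wc RB infinite_UNIV_nat AM conv])
  qed
  show ?thesis
  proof
    fix T :: "'a \<Rightarrow> 'a" assume T: "T \<in> bounded_ops"
    then have bT: "bounded_clinear T" by (simp add: bounded_ops_def)
    have lin: "clinear T" by (rule bounded_clinear_clinear[OF bT])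
    define A where "A N = (\<lambda>x. \<Sum>j\<in>{..<N}. 1 *\<^sub>C rank_one (T (h j)) (h j) x)" for N
    have AM: "\<forall>N\<in>UNIV. A N \<in> M"
    proof
      fix N :: nat
      have "\<forall>j\<in>{..<N}. rank_one (T (h j)) (h j) \<in> M" using r1 by blast
      then show "A N \<in> M" unfolding A_def
        by (rule sub_sum[OF sub finite_lessThan, where c="\<lambda>_. 1"])
    qed
    have conv: "\<forall>x y. (\<lambda>N. cinner (A N x) y) \<longlonglongrightarrow> cinner (T x) y"
    proof (intro allI)
      fix x y
      have eqA: "A N x = T (\<Sum>j<N. cinner x (h j) *\<^sub>C h j)" for N
        unfolding A_def by (simp add: clinear_sum[OF lin] clinear_scaleC[OF lin] rank_one_def scaleC_one)
      have "(\<lambda>N. T (\<Sum>j<N. cinner x (h j) *\<^sub>C h j)) \<longlonglongrightarrow> T x"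
        by (rule bounded_clinear_tendsto[OF bT onb_expansion[OF oh]])
      then have "(\<lambda>N. cinner (T (\<Sum>j<N. cinner x (h j) *\<^sub>C h j)) y) \<longlonglongrightarrow> cinner (T x) y"
        by (rule cinner_tendsto_left)
      then show "(\<lambda>N. cinner (A N x) y) \<longlonglongrightarrow> cinner (T x) y" unfolding eqA .
    qed
    show "T \<in> M" by (rule wot_limit_in[OF wc T infinite_UNIV_nat AM conv])
  qed
qed


lemma bounded_ops_subalgebra: "op_subalgebra (bounded_ops :: ('a::complex_inner \<Rightarrow> 'a) set)"
  unfolding op_subalgebra_def bounded_ops_def
  by (auto intro: bounded_clinear_zero bounded_clinear_add bounded_clinear_scale bounded_clinear_comp)

lemma bounded_ops_wot_closed: "wot_closed (bounded_ops :: ('a::complex_inner \<Rightarrow> 'a) set)"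
  unfolding wot_closed_def by blast

theorem proposition3p1:
  fixes Z1 Z2 :: "'a::chilbert_space \<Rightarrow> 'a"
    and p :: nat
  assumes "separable_hspace TYPE('a)"
    and "infinite_dimensional TYPE('a)"
    and "read_isometries Z1 Z2"
    and "p \<noteq> 0"
  shows "wot_algebra_generated {Zword Z1 Z2 \<mu> | \<mu>. \<mu> \<in> words \<and> length \<mu> = p} = bounded_ops"
proof -
  obtain h g :: "nat \<Rightarrow> 'a" and S where
    iso: "isometry Z1" "isometry Z2" and oh: "orthonormal_basis h" and og: "orthonormal_basis g"
    and Sspan: "\<forall>i j k. S i j k \<in> op_cspan {Zword Z1 Z2 w | w. w \<in> words \<and> length w = 2 ^ k}"
    and Sconv: "\<forall>i j. wot_tendsto (\<lambda>k. S i j k) (rank_one (g i) (h j))"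
    using assms(3) unfolding read_isometries_def by blast
  define G where "G = {Zword Z1 Z2 \<mu> | \<mu>. \<mu> \<in> words \<and> length \<mu> = p}"
  have GB: "G \<subseteq> bounded_ops" unfolding G_def bounded_ops_def using Zword_bounded[OF iso] by blast
  have all: "bounded_ops \<subseteq> M" if M: "M \<in> {M. op_subalgebra M \<and> wot_closed M \<and> G \<subseteq> M}" for M
  proof -
    have sub: "op_subalgebra M" and wc: "wot_closed M" and gen: "G \<subseteq> M" using M by auto
    have "\<forall>i j. rank_one (g i) (h j) \<in> M"
      using rank_ones_in[OF sub wc gen[unfolded G_def] assms(4) iso og oh Sspan Sconv] by blast
    then show ?thesis by (rule bounded_in_M[OF sub wc og oh])
  qed
  have mem: "bounded_ops \<in> {M. op_subalgebra M \<and> wot_closed M \<and> G \<subseteq> M}"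
    using bounded_ops_subalgebra bounded_ops_wot_closed GB by blast
  have "wot_algebra_generated G = bounded_ops"
    unfolding wot_algebra_generated_def
  proof
    show "\<Inter> {M. op_subalgebra M \<and> wot_closed M \<and> G \<subseteq> M} \<subseteq> bounded_ops"
      using mem by (rule Inter_lower)
    show "bounded_ops \<subseteq> \<Inter> {M. op_subalgebra M \<and> wot_closed M \<and> G \<subseteq> M}"
      using all by (rule Inter_greatest)
  qed
  then show ?thesis unfolding G_def .
qed

end
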